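(* Let $X_1,\dots,X_n$ be features and $Y$ a target that is not a.s. constant, $\mathcal{F}=\{1,\dots,n\}$. Then for every $i\in\mathcal{F}$, $$\frac{\mathrm{Dep}(X_i,Y)}{n}\le \mathrm{FI}(i)\le \mathrm{Dep}(\mathcal{F},Y).$$
   Context: All random variables are discrete with finite support and defined on a common probability space. For discrete random variables (or random vectors) $X$ and $Y$, define $$\mathrm{UD}(X,Y):=\sum_x p_X(x)\sum_y \bigl|p_{Y\mid X=x}(y)-p_Y(y)\bigr|,$$ and, when $Y$ is not almost surely constant, $\mathrm{Dep}(X,Y):=\mathrm{UD}(X,Y)/\mathrm{UD}(Y,Y)$. Given features $X_1,\dots,X_n$ with index set $\mathcal{F}=\{1,\dots,n\}$ and $S\subseteq\mathcal{F}$, write $X_S=(X_i)_{i\in S}$ ($X_\emptyset$ constant) and $\mathrm{Dep}(S,Y):=\mathrm{Dep}(X_S,Y)$. The Berkelmans–Pries feature importance is $$\mathrm{FI}(i):=\sum_{S\subseteq\mathcal{F}\setminus\{i\}}\frac{|S|!\,(n-|S|-1)!}{n!}\bigl(\mathrm{Dep}(S\cup\{i\},Y)-\mathrm{Dep}(S,Y)\bigr).$$ *)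

theory Defs
  imports "HOL-Probability.Probability"
begin

definition UD :: "'w pmf \<Rightarrow> ('w \<Rightarrow> 'a) \<Rightarrow> ('w \<Rightarrow> 'b) \<Rightarrow> real" where
  "UD Omega X Y =
     (\<Sum>x \<in> X ` set_pmf Omega. pmf (map_pmf X Omega) x *
        (\<Sum>y \<in> Y ` set_pmf Omega.
           \<bar>pmf (map_pmf (\<lambda>w. (X w, Y w)) Omega) (x, y) / pmf (map_pmf X Omega) x
            - pmf (map_pmf Y Omega) y\<bar>))"

definition Dep :: "'w pmf \<Rightarrow> ('w \<Rightarrow> 'a) \<Rightarrow> ('w \<Rightarrow> 'b) \<Rightarrow> real" where
  "Dep Omega X Y = UD Omega X Y / UD Omega Y Y"

definition featvec :: "(nat \<Rightarrow> 'w \<Rightarrow> 'v) \<Rightarrow> nat set \<Rightarrow> 'w \<Rightarrow> (nat \<Rightarrow> 'v)" where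
  "featvec X S = (\<lambda>w i. if i \<in> S then X i w else undefined)"

definition DepS :: "'w pmf \<Rightarrow> (nat \<Rightarrow> 'w \<Rightarrow> 'v) \<Rightarrow> nat set \<Rightarrow> ('w \<Rightarrow> 'b) \<Rightarrow> real" where
  "DepS Omega X S Y = Dep Omega (featvec X S) Y"

definition FI :: "'w pmf \<Rightarrow> nat \<Rightarrow> (nat \<Rightarrow> 'w \<Rightarrow> 'v) \<Rightarrow> ('w \<Rightarrow> 'b) \<Rightarrow> nat \<Rightarrow> real" where
  "FI Omega n X Y i =
     (\<Sum>S \<in> Pow ({1..n} - {i}).
        fact (card S) * fact (n - card S - 1) / fact n
        * (DepS Omega X (S \<union> {i}) Y - DepS Omega X S Y))"

end

theory Submission
  imports Defs
begin

definition DD :: "('z \<times> 'y) pmf \<Rightarrow> real" where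
  "DD Q = (\<Sum>z \<in> fst ` set_pmf Q. \<Sum>y \<in> snd ` set_pmf Q.
      \<bar>pmf Q (z, y) - pmf (map_pmf fst Q) z * pmf (map_pmf snd Q) y\<bar>)"

lemma UD_DD: "UD Omega X Y = DD (map_pmf (\<lambda>w. (X w, Y w)) Omega)"
proof -
  let ?Q = "map_pmf (\<lambda>w. (X w, Y w)) Omega"
  have f1: "fst ` set_pmf ?Q = X ` set_pmf Omega" by (simp add: image_image)
  have f2: "snd ` set_pmf ?Q = Y ` set_pmf Omega" by (simp add: image_image)
  have m1: "map_pmf fst ?Q = map_pmf X Omega" by (simp add: map_pmf_comp)
  have m2: "map_pmf snd ?Q = map_pmf Y Omega" by (simp add: map_pmf_comp)
  show ?thesis
    unfolding UD_def DD_def f1 f2 m1 m2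
  proof (intro sum.cong refl)
    fix x assume "x \<in> X ` set_pmf Omega"
    then have p: "pmf (map_pmf X Omega) x > 0" by (intro pmf_positive) simp
    show "pmf (map_pmf X Omega) x * (\<Sum>y\<in>Y ` set_pmf Omega. \<bar>pmf ?Q (x, y) / pmf (map_pmf X Omega) x - pmf (map_pmf Y Omega) y\<bar>)
       = (\<Sum>y\<in>Y ` set_pmf Omega. \<bar>pmf ?Q (x, y) - pmf (map_pmf X Omega) x * pmf (map_pmf Y Omega) y\<bar>)"
      unfolding sum_distrib_left
    proof (intro sum.cong refl)
      fix y
      have "pmf (map_pmf X Omega) x * \<bar>pmf ?Q (x, y) / pmf (map_pmf X Omega) x - pmf (map_pmf Y Omega) y\<bar>
        = \<bar>pmf (map_pmf X Omega) x * (pmf ?Q (x, y) / pmf (map_pmf X Omega) x - pmf (map_pmf Y Omega) y)\<bar>"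
        using p by (simp add: abs_mult)
      also have "\<dots> = \<bar>pmf ?Q (x, y) - pmf (map_pmf X Omega) x * pmf (map_pmf Y Omega) y\<bar>"
        using p by (simp add: algebra_simps)
      finally show "pmf (map_pmf X Omega) x * \<bar>pmf ?Q (x, y) / pmf (map_pmf X Omega) x - pmf (map_pmf Y Omega) y\<bar>
        = \<bar>pmf ?Q (x, y) - pmf (map_pmf X Omega) x * pmf (map_pmf Y Omega) y\<bar>" .
    qed
  qed
qed

lemma pmf_map_finite:
  assumes "finite (set_pmf Q)"
  shows "pmf (map_pmf g Q) b = (\<Sum>a \<in> {a \<in> set_pmf Q. g a = b}. pmf Q a)"
proof -
  have "pmf (map_pmf g Q) b = measure Q (g -` {b} \<inter> set_pmf Q)"
    by (simp add: pmf_map measure_Int_set_pmf)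
  also have "g -` {b} \<inter> set_pmf Q = {a \<in> set_pmf Q. g a = b}" by auto
  also have "measure Q \<dots> = (\<Sum>a \<in> {a \<in> set_pmf Q. g a = b}. pmf Q a)"
    using assms by (intro measure_measure_pmf_finite) auto
  finally show ?thesis .
qed

lemma DD_mono:
  assumes fin: "finite (set_pmf Q)"
  shows "DD (map_pmf (apfst f) Q) \<le> DD Q"
proof -
  let ?Q' = "map_pmf (apfst f) Q"
  define A where "A = fst ` set_pmf Q"
  define B where "B = snd ` set_pmf Q"
  have fA: "finite A" and fB: "finite B" using fin by (auto simp: A_def B_def)
  define q1 where "q1 = map_pmf fst Q"
  define q2 where "q2 = map_pmf snd Q"
  have s1: "fst ` set_pmf ?Q' = f ` A" by (force simp: A_def image_image apfst_def map_prod_def)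
  have s2: "snd ` set_pmf ?Q' = B" by (force simp: B_def image_image apfst_def map_prod_def)
  have m2: "map_pmf snd ?Q' = q2" by (simp add: q2_def map_pmf_comp apfst_def map_prod_def split_def)
  have m1: "map_pmf fst ?Q' = map_pmf f q1" by (simp add: q1_def map_pmf_comp apfst_def map_prod_def split_def)
  have setq1: "set_pmf q1 = A" by (simp add: q1_def A_def)
  have P1: "pmf (map_pmf fst ?Q') x = (\<Sum>z \<in> {z \<in> A. f z = x}. pmf q1 z)" for x
    unfolding m1 using fA by (subst pmf_map_finite) (auto simp: setq1)
  have P2: "pmf ?Q' (x, y) = (\<Sum>z \<in> {z \<in> A. f z = x}. pmf Q (z, y))" for x y
  proof -
    have "pmf ?Q' (x, y) = (\<Sum>p \<in> {p \<in> set_pmf Q. apfst f p = (x, y)}. pmf Q p)"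
      using fin by (rule pmf_map_finite)
    also have "\<dots> = (\<Sum>p \<in> {z \<in> A. f z = x} \<times> {y}. pmf Q p)"
    proof (rule sum.mono_neutral_left)
      show "finite ({z \<in> A. f z = x} \<times> {y})" using fA by auto
      show "{p \<in> set_pmf Q. apfst f p = (x, y)} \<subseteq> {z \<in> A. f z = x} \<times> {y}"
        by (force simp: A_def apfst_def map_prod_def)
      show "\<forall>i\<in>{z \<in> A. f z = x} \<times> {y} - {p \<in> set_pmf Q. apfst f p = (x, y)}. pmf Q i = 0"
        by (auto simp: apfst_def map_prod_def set_pmf_eq)
    qed
    also have "\<dots> = (\<Sum>z \<in> {z \<in> A. f z = x}. pmf Q (z, y))"
      by (rule sum.reindex_bij_witness[where i="\<lambda>z. (z, y)" and j=fst]) auto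
    finally show ?thesis .
  qed
  have "DD ?Q' = (\<Sum>x \<in> f ` A. \<Sum>y \<in> B. \<bar>\<Sum>z \<in> {z \<in> A. f z = x}. (pmf Q (z, y) - pmf q1 z * pmf q2 y)\<bar>)"
    unfolding DD_def s1 s2 m2 P1 P2 by (simp add: sum_subtractf sum_distrib_right)
  also have "\<dots> \<le> (\<Sum>x \<in> f ` A. \<Sum>y \<in> B. \<Sum>z \<in> {z \<in> A. f z = x}. \<bar>pmf Q (z, y) - pmf q1 z * pmf q2 y\<bar>)"
    by (intro sum_mono sum_abs)
  also have "\<dots> = (\<Sum>x \<in> f ` A. \<Sum>z \<in> {z \<in> A. f z = x}. \<Sum>y \<in> B. \<bar>pmf Q (z, y) - pmf q1 z * pmf q2 y\<bar>)"
    by (intro sum.cong refl sum.swap)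
  also have "\<dots> = (\<Sum>z \<in> A. \<Sum>y \<in> B. \<bar>pmf Q (z, y) - pmf q1 z * pmf q2 y\<bar>)"
    using fA by (intro sum.group) auto
  also have "\<dots> = DD Q" by (simp add: DD_def A_def B_def q1_def q2_def)
  finally show ?thesis .
qed


lemma UD_nonneg: "UD Omega X Y \<ge> 0"
  unfolding UD_def by (intro sum_nonneg mult_nonneg_nonneg) auto

lemma Dep_nonneg: "Dep Omega X Y \<ge> 0"
  unfolding Dep_def by (intro divide_nonneg_nonneg UD_nonneg)

lemma UD_mono:
  assumes "finite (Z ` set_pmf Omega)" "finite (Y ` set_pmf Omega)"
    and "\<And>w. w \<in> set_pmf Omega \<Longrightarrow> X w = f (Z w)"
  shows "UD Omega X Y \<le> UD Omega Z Y"
proof -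
  have "map_pmf (\<lambda>w. (X w, Y w)) Omega = map_pmf (\<lambda>w. apfst f (Z w, Y w)) Omega"
    using assms(3) by (intro map_pmf_cong) auto
  also have "\<dots> = map_pmf (apfst f) (map_pmf (\<lambda>w. (Z w, Y w)) Omega)"
    by (simp add: map_pmf_comp)
  finally have e: "map_pmf (\<lambda>w. (X w, Y w)) Omega = map_pmf (apfst f) (map_pmf (\<lambda>w. (Z w, Y w)) Omega)" .
  have "set_pmf (map_pmf (\<lambda>w. (Z w, Y w)) Omega) \<subseteq> Z ` set_pmf Omega \<times> Y ` set_pmf Omega" by auto
  then have fin: "finite (set_pmf (map_pmf (\<lambda>w. (Z w, Y w)) Omega))"
    using assms(1,2) by (meson finite_SigmaI finite_subset)
  show ?thesis unfolding UD_DD e using DD_mono[OF fin] .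
qed

lemma Dep_mono:
  assumes "finite (Z ` set_pmf Omega)" "finite (Y ` set_pmf Omega)"
    and "\<And>w. w \<in> set_pmf Omega \<Longrightarrow> X w = f (Z w)"
  shows "Dep Omega X Y \<le> Dep Omega Z Y"
proof -
  have "UD Omega X Y \<le> UD Omega Z Y" by (rule UD_mono[OF assms(1,2)]) (rule assms(3))
  then show ?thesis unfolding Dep_def by (intro divide_right_mono UD_nonneg)
qed

lemma UD_const: "UD Omega (\<lambda>w. c) Y = 0"
proof -
  have s: "(\<lambda>w. c) ` set_pmf Omega = {c}" using set_pmf_not_empty[of Omega] by auto
  have "pmf (map_pmf (\<lambda>w. (c, Y w)) Omega) (c, y) = pmf (map_pmf Y Omega) y" for y
  proof -
    have "map_pmf (\<lambda>w. (c, Y w)) Omega = map_pmf (Pair c) (map_pmf Y Omega)"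
      by (simp add: map_pmf_comp)
    then show ?thesis by (simp add: pmf_map_inj' inj_on_def)
  qed
  then show ?thesis unfolding UD_def s by simp
qed

lemma Dep_const: "Dep Omega (\<lambda>w. c) Y = 0"
  unfolding Dep_def UD_const by simp

lemma sum_Pow_card:
  assumes "finite A"
  shows "(\<Sum>S \<in> Pow A. g (card S)) = (\<Sum>k \<in> {0..card A}. real (card A choose k) * g (card A - (card A - k)))"
proof -
  have "(\<Sum>S \<in> Pow A. g (card S)) = (\<Sum>k \<in> {0..card A}. \<Sum>S \<in> {S \<in> Pow A. card S = k}. g (card S))"
    using assms by (intro sum.group[symmetric]) (auto intro: card_mono)
  also have "\<dots> = (\<Sum>k \<in> {0..card A}. real (card A choose k) * g (card A - (card A - k)))"
  proof (intro sum.cong refl)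
    fix k assume k: "k \<in> {0..card A}"
    have "(\<Sum>S \<in> {S \<in> Pow A. card S = k}. g (card S)) = (\<Sum>S \<in> {S \<in> Pow A. card S = k}. g k)"
      by simp
    also have "\<dots> = real (card {S \<in> Pow A. card S = k}) * g k" by simp
    also have "{S \<in> Pow A. card S = k} = {B. B \<subseteq> A \<and> card B = k}" by auto
    also have "card \<dots> = card A choose k" using assms by (rule n_subsets)
    finally show "(\<Sum>S \<in> {S \<in> Pow A. card S = k}. g (card S)) = real (card A choose k) * g (card A - (card A - k))"
      using k by simp
  qed
  finally show ?thesis .
qed

theorem mainTheorem5:
  fixes Omega :: "'w pmf" and n :: nat
    and X :: "nat \<Rightarrow> 'w \<Rightarrow> 'v" and Y :: "'w \<Rightarrow> 'b" and i :: nat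
  assumes fin_X: "\<And>j. j \<in> {1..n} \<Longrightarrow> finite (X j ` set_pmf Omega)"
    and fin_Y: "finite (Y ` set_pmf Omega)"
    and Y_nonconst: "\<not> (\<exists>c. AE w in measure_pmf Omega. Y w = c)"
    and i_in: "i \<in> {1..n}"
  shows "Dep Omega (X i) Y / real n \<le> FI Omega n X Y i
         \<and> FI Omega n X Y i \<le> DepS Omega X {1..n} Y"
proof -
  define F where "F = {1..n::nat}"
  define A where "A = F - {i}"
  have n1: "n \<ge> 1" using i_in by auto
  have fA: "finite A" by (simp add: A_def F_def)
  have cA: "card A = n - 1" using i_in by (simp add: A_def F_def)
  have finS: "finite (featvec X S ` set_pmf Omega)" if "S \<subseteq> F" for S
  proof -
    have "featvec X S ` set_pmf Omega \<subseteq> PiE S (\<lambda>j. X j ` set_pmf Omega)"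
      by (auto simp: featvec_def PiE_def extensional_def)
    moreover have "finite (PiE S (\<lambda>j. X j ` set_pmf Omega))"
      using that fin_X by (intro finite_PiE) (auto simp: F_def intro: finite_subset)
    ultimately show ?thesis by (rule finite_subset)
  qed
  have mono: "DepS Omega X S Y \<le> DepS Omega X T Y" if "S \<subseteq> T" "T \<subseteq> F" for S T
    unfolding DepS_def
  proof (rule Dep_mono[OF finS[OF that(2)] fin_Y])
    fix w show "featvec X S w = (\<lambda>v j. if j \<in> S then v j else undefined) (featvec X T w)"
      using that(1) by (auto simp: featvec_def fun_eq_iff)
  qed
  have d0: "DepS Omega X {} Y = 0"
  proof -
    have "featvec X {} = (\<lambda>w j. undefined)" by (simp add: featvec_def)
    then show ?thesis unfolding DepS_def by (simp add: Dep_const)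
  qed
  have fi: "finite (X i ` set_pmf Omega)" using fin_X i_in by auto
  have d1: "DepS Omega X {i} Y = Dep Omega (X i) Y"
  proof (rule antisym)
    show "DepS Omega X {i} Y \<le> Dep Omega (X i) Y" unfolding DepS_def
      by (rule Dep_mono[OF fi fin_Y, where f="\<lambda>a j. if j = i then a else undefined"])
         (auto simp: featvec_def)
    show "Dep Omega (X i) Y \<le> DepS Omega X {i} Y" unfolding DepS_def
      by (rule Dep_mono[OF finS fin_Y, where f="\<lambda>v. v i"]) (use i_in in \<open>auto simp: featvec_def F_def\<close>)
  qed
  define wt where "wt S = fact (card S) * fact (n - card S - 1) / (fact n :: real)" for S :: "nat set"
  have wt_nn: "wt S \<ge> 0" for S by (simp add: wt_def)
  have FI_eq: "FI Omega n X Y i = (\<Sum>S \<in> Pow A. wt S * (DepS Omega X (S \<union> {i}) Y - DepS Omega X S Y))"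
    by (simp add: FI_def wt_def A_def F_def)
  have SA: "S \<union> {i} \<subseteq> F" "S \<subseteq> F" if "S \<in> Pow A" for S
    using that i_in by (auto simp: A_def F_def)
  have wsum: "(\<Sum>S \<in> Pow A. wt S) = 1"
  proof -
    have "(\<Sum>S \<in> Pow A. wt S) = (\<Sum>S \<in> Pow A. (\<lambda>k. fact k * fact (n - k - 1) / (fact n :: real)) (card S))"
      by (simp add: wt_def)
    also have "\<dots> = (\<Sum>k \<in> {0..n-1}. real ((n-1) choose k) * (fact (n - 1 - (n - 1 - k)) * fact (n - (n - 1 - (n - 1 - k)) - 1) / fact n))"
      by (subst sum_Pow_card[OF fA]) (simp add: cA)
    also have "\<dots> = (\<Sum>k \<in> {0..n-1}. 1 / real n)"
    proof (intro sum.cong refl)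
      fix k assume k: "k \<in> {0..n-1}"
      then have e1: "n - 1 - (n - 1 - k) = k" and e2: "n - k - 1 = n - 1 - k" by auto
      have "fact k * fact (n - 1 - k) * ((n-1) choose k) = (fact (n-1) :: nat)"
        using k by (intro binomial_fact_lemma) auto
      then have b: "real ((n-1) choose k) * fact k * fact (n - 1 - k) = fact (n-1)"
        by (metis (mono_tags, lifting) mult.commute mult.left_commute of_nat_fact of_nat_mult)
      have fn: "(fact n :: real) = real n * fact (n - 1)" using n1 by (simp add: fact_reduce)
      show "real ((n-1) choose k) * (fact (n - 1 - (n - 1 - k)) * fact (n - (n - 1 - (n - 1 - k)) - 1) / fact n) = 1 / real n"
        unfolding e1 e2 fn using b n1 by (simp add: field_simps)
    qed
    also have "\<dots> = 1" using n1 by simp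
    finally show ?thesis .
  qed
  have terms_nn: "wt S * (DepS Omega X (S \<union> {i}) Y - DepS Omega X S Y) \<ge> 0" if "S \<in> Pow A" for S
    using wt_nn mono[of S "S \<union> {i}"] SA[OF that] by (intro mult_nonneg_nonneg) auto
  have lower: "Dep Omega (X i) Y / real n \<le> FI Omega n X Y i"
  proof -
    have "wt {} * (DepS Omega X ({} \<union> {i}) Y - DepS Omega X {} Y) = Dep Omega (X i) Y / real n"
      using n1 by (simp add: wt_def d0 d1 fact_reduce[of n])
    moreover have "wt {} * (DepS Omega X ({} \<union> {i}) Y - DepS Omega X {} Y) \<le> FI Omega n X Y i"
      unfolding FI_eq using fA terms_nn by (intro member_le_sum) auto
    ultimately show ?thesis by simp
  qed
  have upper: "FI Omega n X Y i \<le> DepS Omega X F Y"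
  proof -
    have "FI Omega n X Y i \<le> (\<Sum>S \<in> Pow A. wt S * DepS Omega X F Y)"
      unfolding FI_eq
    proof (intro sum_mono mult_left_mono wt_nn)
      fix S assume S: "S \<in> Pow A"
      show "DepS Omega X (S \<union> {i}) Y - DepS Omega X S Y \<le> DepS Omega X F Y"
        using mono[OF SA(1)[OF S] order_refl] Dep_nonneg[of Omega "featvec X S" Y]
        by (simp add: DepS_def)
    qed
    also have "\<dots> = DepS Omega X F Y" using wsum by (simp add: sum_distrib_right[symmetric])
    finally show ?thesis .
  qed
  show ?thesis using lower upper by (simp add: F_def)
qed

end
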